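(* Let $n\ge 1$, $k\ge 1$, and let $K=\sum_{i=1}^{k-1}|i-1\rangle\langle i|$ be the $k\times k$ nilpotent Jordan block acting on $\mathbb{C}^k$ with basis $|0\rangle,\ldots,|k-1\rangle$. Let $\mathcal{S}\subseteq(\mathbb{C}^k)^{\otimes n}$ be the permutation-symmetric subspace. For $0\le j\le k-1$ define $$|E_j\rangle=\sum_{\substack{i_1,\ldots,i_n\ge 0\\ i_1+\cdots+i_n=j}}|i_1\rangle|i_2\rangle\cdots|i_n\rangle.$$ Then a vector $|\psi\rangle\in\mathcal{S}$ satisfies $K_{(1)}|\psi\rangle\in\mathcal{S}$ if and only if $|\psi\rangle=\sum_{j=0}^{k-1}\alpha_j|E_j\rangle$ for some complex numbers $\alpha_0,\ldots,\alpha_{k-1}$.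
   Context: $\mathcal{S}$ is the set of vectors in $(\mathbb{C}^k)^{\otimes n}$ invariant under all permutations of the $n$ tensor factors. $K_{(1)}$ denotes $K\otimes\mathbb{I}\otimes\cdots\otimes\mathbb{I}$ on $(\mathbb{C}^k)^{\otimes n}$. *)

theory Defs
  imports Complex_Main "HOL-Combinatorics.Permutations"
begin

text \<open>A vector of (C^k)^{\<otimes>n} is represented by its coordinates in the
product basis |i_1>...|i_n>, i.e. as a function from index lists
(length n, entries < k) to complex numbers, vanishing off valid index lists.\<close>

definition idx :: "nat \<Rightarrow> nat \<Rightarrow> nat list set" where
  "idx n k = {xs. length xs = n \<and> set xs \<subseteq> {..<k}}"

definition tensor_space :: "nat \<Rightarrow> nat \<Rightarrow> (nat list \<Rightarrow> complex) set" where
  "tensor_space n k = {\<psi>. \<forall>xs. xs \<notin> idx n k \<longrightarrow> \<psi> xs = 0}"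

definition permute_factors :: "nat \<Rightarrow> (nat \<Rightarrow> nat) \<Rightarrow> nat list \<Rightarrow> nat list" where
  "permute_factors n p xs = map (\<lambda>i. xs ! p i) [0..<n]"

definition sym_subspace :: "nat \<Rightarrow> nat \<Rightarrow> (nat list \<Rightarrow> complex) set" where
  "sym_subspace n k = {\<psi> \<in> tensor_space n k.
     \<forall>p xs. p permutes {..<n} \<longrightarrow> xs \<in> idx n k \<longrightarrow> \<psi> (permute_factors n p xs) = \<psi> xs}"

text \<open>K = sum_{i=1}^{k-1} |i-1><i| applied to the first factor:
 (K_(1) psi)(i_1,i_2,...,i_n) = psi(i_1+1,i_2,...,i_n) if i_1+1 < k, else 0.\<close>
definition K1 :: "nat \<Rightarrow> nat \<Rightarrow> (nat list \<Rightarrow> complex) \<Rightarrow> nat list \<Rightarrow> complex" where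
  "K1 n k \<psi> xs = (if xs \<in> idx n k \<and> hd xs + 1 < k then \<psi> ((hd xs + 1) # tl xs) else 0)"

definition E :: "nat \<Rightarrow> nat \<Rightarrow> nat \<Rightarrow> nat list \<Rightarrow> complex" where
  "E n k j xs = (if xs \<in> idx n k \<and> sum_list xs = j then 1 else 0)"

end

theory Submission
  imports Defs
begin

lemma perm_swap:
  assumes "length xs = n" "a < n" "b < n"
  shows "permute_factors n (Transposition.transpose a b) xs = xs[a := xs!b, b := xs!a]"
  using assms
  by (intro nth_equalityI) (auto simp: permute_factors_def nth_list_update transpose_def)

lemma perm_swap0:
  assumes "length (x # t) = n" "j < length t"
  shows "permute_factors n (Transposition.transpose 0 (Suc j)) (x # t) = (t!j) # t[j := x]"
  using perm_swap[OF assms(1), of 0 "Suc j"] assms by simp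

lemma perm_idx:
  assumes "p permutes {..<n}" "xs \<in> idx n k"
  shows "permute_factors n p xs \<in> idx n k"
proof -
  have "\<And>i. i < n \<Longrightarrow> p i < n" using assms(1) permutes_in_image by fastforce
  then show ?thesis using assms(2)
    by (auto simp: idx_def permute_factors_def subset_iff)
qed

lemma perm_sum:
  assumes "p permutes {..<n}" "length xs = n"
  shows "sum_list (permute_factors n p xs) = sum_list xs"
proof -
  have "sum_list (permute_factors n p xs) = (\<Sum>i<n. xs ! p i)"
    by (simp add: permute_factors_def sum_list_sum_nth lessThan_atLeast0)
  also have "\<dots> = (\<Sum>i<n. xs ! i)"
    using sum.permute[OF assms(1), of "(!) xs"] by (simp add: comp_def)
  also have "\<dots> = sum_list xs" using assms(2)
    by (simp add: sum_list_sum_nth lessThan_atLeast0)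
  finally show ?thesis .
qed

lemma sumE:
  assumes "xs \<in> idx n k"
  shows "(\<Sum>j<k. \<alpha> j * E n k j xs) = (if sum_list xs < k then \<alpha> (sum_list xs) else 0)"
proof -
  have "(\<Sum>j<k. \<alpha> j * E n k j xs) = (\<Sum>j<k. if sum_list xs = j then \<alpha> j else 0)"
    using assms by (intro sum.cong) (auto simp: E_def)
  then show ?thesis by (simp add: sum.delta)
qed

lemma upd_ok: "set t \<subseteq> {..<k} \<Longrightarrow> x < (k::nat) \<Longrightarrow> set (t[j:=x]) \<subseteq> {..<k}"
  by (metis insert_subset lessThan_iff set_update_subset_insert subset_trans)

lemma hd_le_sum: "xs \<noteq> [] \<Longrightarrow> hd xs \<le> sum_list (xs::nat list)"
  by (cases xs) auto

lemma K1E: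
  assumes "n \<ge> 1"
  shows "K1 n k (\<lambda>xs. \<Sum>j<k. \<alpha> j * E n k j xs) xs =
     (if xs \<in> idx n k \<and> sum_list xs + 1 < k then \<alpha> (sum_list xs + 1) else 0)"
proof (cases "xs \<in> idx n k")
  case True
  then have ne: "xs \<noteq> []" using assms by (auto simp: idx_def)
  show ?thesis
  proof (cases "hd xs + 1 < k")
    case h: True
    have i2: "(hd xs + 1) # tl xs \<in> idx n k" using True h ne
      by (cases xs) (auto simp: idx_def)
    have s: "sum_list ((hd xs + 1) # tl xs) = sum_list xs + 1" using ne by (cases xs) auto
    have eq: "(\<Sum>j<k. \<alpha> j * E n k j ((hd xs + 1) # tl xs)) = (if sum_list xs + 1 < k then \<alpha> (sum_list xs + 1) else 0)"
      unfolding sumE[OF i2, of \<alpha>] s by (rule refl)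
    show ?thesis unfolding K1_def if_P[OF conjI[OF True h]] eq using True by simp
  next
    case False
    then show ?thesis using hd_le_sum[OF ne] True by (auto simp: K1_def)
  qed
qed (simp add: K1_def)

context
  fixes n k :: nat and \<psi> :: "nat list \<Rightarrow> complex"
  assumes n1: "n \<ge> 1" and S: "\<psi> \<in> sym_subspace n k" and KS: "K1 n k \<psi> \<in> sym_subspace n k"
begin

lemma swapK:
  assumes "a # t \<in> idx n k" "j < length t"
  shows "K1 n k \<psi> (a # t) = K1 n k \<psi> ((t!j) # t[j := a])"
proof -
  have len: "length (a # t) = n" using assms by (simp add: idx_def)
  have p: "Transposition.transpose 0 (Suc j) permutes {..<n}"
    using len assms by (intro permutes_swap_id) auto
  have "K1 n k \<psi> (permute_factors n (Transposition.transpose 0 (Suc j)) (a # t)) = K1 n k \<psi> (a # t)"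
    using KS assms(1) p unfolding sym_subspace_def by blast
  then show ?thesis using perm_swap0[OF len assms(2)] by simp
qed

lemma swapP:
  assumes "a # t \<in> idx n k" "j < length t"
  shows "\<psi> (a # t) = \<psi> ((t!j) # t[j := a])"
proof -
  have len: "length (a # t) = n" using assms by (simp add: idx_def)
  have p: "Transposition.transpose 0 (Suc j) permutes {..<n}"
    using len assms by (intro permutes_swap_id) auto
  have "\<psi> (permute_factors n (Transposition.transpose 0 (Suc j)) (a # t)) = \<psi> (a # t)"
    using S assms(1) p unfolding sym_subspace_def by blast
  then show ?thesis using perm_swap0[OF len assms(2)] by simp
qed

lemma chain:
  assumes v: "a # t \<in> idx n k" and j: "j < length t" and b: "t!j \<ge> 1"
  shows "\<psi> (a # t) = K1 n k \<psi> (a # t[j := t!j - 1])"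
proof -
  let ?b = "t!j"
  have st0: "set t \<subseteq> {..<k}" using v by (simp add: idx_def)
  then have bk: "?b < k" using nth_mem[OF j] by auto
  then have "?b - 1 < k" by simp
  from upd_ok[OF st0 this] have "set (t[j := ?b - 1]) \<subseteq> {..<k}" .
  then have vz: "a # t[j := ?b - 1] \<in> idx n k" using v by (simp add: idx_def)
  have "K1 n k \<psi> (a # t[j := ?b - 1]) = K1 n k \<psi> ((?b - 1) # t[j := a])"
    using swapK[OF vz, of j] j by simp
  also have "\<dots> = \<psi> (?b # t[j := a])"
  proof -
    have "a < k" using v by (simp add: idx_def)
    from upd_ok[OF st0 this] have "set (t[j := a]) \<subseteq> {..<k}" .
    then have "(?b - 1) # t[j := a] \<in> idx n k" using v bk by (simp add: idx_def)
    then show ?thesis using b bk by (simp add: K1_def)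
  qed
  also have "\<dots> = \<psi> (a # t)" using swapP[OF v j] by simp
  finally show ?thesis by simp
qed

lemma transfer:
  assumes v: "a # t \<in> idx n k" and j: "j < length t" and b: "t!j \<ge> 1" and a: "a + 1 < k"
  shows "\<psi> (a # t) = \<psi> ((a+1) # t[j := t!j - 1])"
proof -
  have "set t \<subseteq> {..<k}" using v by (simp add: idx_def)
  then have "t!j < k" using nth_mem[OF j] by auto
  then have "t!j - 1 < k" by simp
  from upd_ok[OF \<open>set t \<subseteq> {..<k}\<close> this] have "set (t[j := t!j - 1]) \<subseteq> {..<k}" .
  then show ?thesis using chain[OF v j b] a v by (simp add: K1_def idx_def)
qed

lemma zero:
  assumes v: "a # t \<in> idx n k" and j: "j < length t" and b: "t!j \<ge> 1" and a: "\<not> a + 1 < k"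
  shows "\<psi> (a # t) = 0"
  using chain[OF v j b] a by (simp add: K1_def)

lemma normal:
  "xs \<in> idx n k \<Longrightarrow> \<psi> xs = (if sum_list xs < k then \<psi> (sum_list xs # replicate (n-1) 0) else 0)"
proof (induction "sum_list (tl xs)" arbitrary: xs rule: less_induct)
  case less
  then obtain a t where xs: "xs = a # t" using n1 by (cases xs) (auto simp: idx_def)
  have lt: "length t = n - 1" using less.prems xs by (auto simp: idx_def)
  show ?case
  proof (cases "\<forall>x\<in>set t. x = 0")
    case True
    then have "t = replicate (n-1) 0" using lt by (metis replicate_length_same)
    moreover have "a < k" using less.prems xs by (simp add: idx_def)
    ultimately show ?thesis using xs True by (simp add: sum_list_replicate)
  next
    case False
    then obtain j where j: "j < length t" and b: "t!j \<ge> 1"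
      by (metis in_set_conv_nth less_one not_le)
    show ?thesis
    proof (cases "a + 1 < k")
      case True
      let ?ys = "(a+1) # t[j := t!j - 1]"
      have st0: "set t \<subseteq> {..<k}" using less.prems xs by (simp add: idx_def)
      then have bk: "t!j < k" using nth_mem[OF j] by auto
      then have "t!j - 1 < k" by simp
      from upd_ok[OF st0 this] have "set (t[j := t!j - 1]) \<subseteq> {..<k}" .
      then have vy: "?ys \<in> idx n k" using less.prems xs True by (simp add: idx_def)
      have st: "sum_list (t[j := t!j - 1]) + 1 = sum_list t"
      proof -
        have "t!j \<le> sum_list t" by (rule elem_le_sum_list[OF j])
        then show ?thesis using b sum_list_update[OF j, of "t!j - 1"] by simp
      qed
      have sy: "sum_list ?ys = sum_list xs" using st xs by simp
      have "sum_list (tl ?ys) < sum_list (tl xs)" using st xs by simp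
      from less.hyps[OF this vy] have "\<psi> ?ys = (if sum_list ?ys < k then \<psi> (sum_list ?ys # replicate (n-1) 0) else 0)" .
      moreover have "\<psi> xs = \<psi> ?ys" using transfer[OF _ j b True] less.prems unfolding xs by blast
      ultimately show ?thesis unfolding sy by simp
    next
      case False
      have "sum_list xs \<ge> k" using False xs b elem_le_sum_list[OF j] by simp
      moreover have "\<psi> xs = 0" using zero[OF _ j b False] less.prems unfolding xs by blast
      ultimately show ?thesis by simp
    qed
  qed
qed

end

theorem theorem5:
  fixes n k :: nat and \<psi> :: "nat list \<Rightarrow> complex"
  assumes "n \<ge> 1" and "k \<ge> 1"
    and "\<psi> \<in> sym_subspace n k"
  shows "K1 n k \<psi> \<in> sym_subspace n k \<longleftrightarrow>
         (\<exists>\<alpha> :: nat \<Rightarrow> complex. \<psi> = (\<lambda>xs. \<Sum>j<k. \<alpha> j * E n k j xs))"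
proof
  assume KS: "K1 n k \<psi> \<in> sym_subspace n k"
  define \<alpha> where "\<alpha> j = \<psi> (j # replicate (n-1) 0)" for j
  have "\<psi> xs = (\<Sum>j<k. \<alpha> j * E n k j xs)" for xs
  proof (cases "xs \<in> idx n k")
    case True
    show ?thesis using normal[OF assms(1) assms(3) KS True] sumE[OF True] by (simp add: \<alpha>_def)
  next
    case False
    then show ?thesis using assms(3) by (simp add: sym_subspace_def tensor_space_def E_def)
  qed
  then show "\<exists>\<alpha>. \<psi> = (\<lambda>xs. \<Sum>j<k. \<alpha> j * E n k j xs)" by blast
next
  assume "\<exists>\<alpha>. \<psi> = (\<lambda>xs. \<Sum>j<k. \<alpha> j * E n k j xs)"
  then obtain \<alpha> where psi: "\<psi> = (\<lambda>xs. \<Sum>j<k. \<alpha> j * E n k j xs)" by blast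
  have K: "K1 n k \<psi> xs = (if xs \<in> idx n k \<and> sum_list xs + 1 < k then \<alpha> (sum_list xs + 1) else 0)" for xs
    unfolding psi by (rule K1E[OF assms(1)])
  show "K1 n k \<psi> \<in> sym_subspace n k"
    unfolding sym_subspace_def tensor_space_def
    using perm_idx perm_sum by (auto simp: K idx_def)
qed

end
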